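(* Let $N>0$ and $L\in\mathbb{Z}_{\ge2}$. Then $C_{L-1}(N)\ge\frac12\ln\frac{L-1}{4\pi eLN}$.
   Context: $\mathcal{B}^n(y,r)$ is the closed Euclidean ball of radius $r$ centered at $y$. A set $\mathcal{C}\subseteq\mathbb{R}^n$ is an $(N,L-1)$-multiple packing ($(N,L-1)$-list-decodable code) if $|\mathcal{C}\cap\mathcal{B}^n(y,\sqrt{nN})|\le L-1$ for every $y\in\mathbb{R}^n$. Its rate is $R(\mathcal{C})=\limsup_{K\to\infty}\frac1n\ln\frac{|\mathcal{C}\cap K\mathcal{A}|}{\mathrm{vol}(K\mathcal{A})}$, where $\mathcal{A}$ is an arbitrary centrally symmetric connected compact set in $\mathbb{R}^n$ with nonempty interior (e.g. the unit ball). $C_{L-1}(N)=\limsup_{n\to\infty}\sup R(\mathcal{C})$ over all $(N,L-1)$-multiple packings $\mathcal{C}\subseteq\mathbb{R}^n$. *)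

theory Defs
  imports "HOL-Analysis.Analysis"
begin

text \<open>Points of R^n are represented as extensional functions nat => real
  supported on {..<n} (i.e. elements of PiE {..<n} (%_. UNIV)).\<close>

definition Rn :: "nat \<Rightarrow> (nat \<Rightarrow> real) set" where
  "Rn n = PiE {..<n} (\<lambda>_. UNIV)"

definition cballn :: "nat \<Rightarrow> (nat \<Rightarrow> real) \<Rightarrow> real \<Rightarrow> (nat \<Rightarrow> real) set" where
  "cballn n y r = {x \<in> Rn n. sqrt (\<Sum>i<n. (x i - y i)^2) \<le> r}"

definition lebn :: "nat \<Rightarrow> (nat \<Rightarrow> real) measure" where
  "lebn n = PiM {..<n} (\<lambda>_. lborel)"

definition multiple_packing :: "nat \<Rightarrow> real \<Rightarrow> nat \<Rightarrow> (nat \<Rightarrow> real) set \<Rightarrow> bool" where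
  "multiple_packing n N L C \<longleftrightarrow> C \<subseteq> Rn n \<and>
     (\<forall>y\<in>Rn n. finite (C \<inter> cballn n y (sqrt (real n * N))) \<and>
                 card (C \<inter> cballn n y (sqrt (real n * N))) \<le> L - 1)"

text \<open>Rate, with the reference body A chosen as the closed unit ball, so K A = B^n(0,K).
  The logarithm of 0 is taken to be minus infinity (and an infinite count to be plus infinity).\<close>
definition rate_term :: "nat \<Rightarrow> (nat \<Rightarrow> real) set \<Rightarrow> real \<Rightarrow> ereal" where
  "rate_term n C K =
     (let S = cballn n (\<lambda>_. 0) K in
      if infinite (C \<inter> S) then \<infinity>
      else if card (C \<inter> S) = 0 then -\<infinity>
      else ereal (ln (real (card (C \<inter> S)) / measure (lebn n) S) / real n))"

definition rate :: "nat \<Rightarrow> (nat \<Rightarrow> real) set \<Rightarrow> ereal" where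
  "rate n C = Limsup at_top (rate_term n C)"

definition capacity :: "real \<Rightarrow> nat \<Rightarrow> ereal" where
  "capacity N L = Limsup sequentially (\<lambda>n. SUP C \<in> {C. multiple_packing n N L C}. rate n C)"

end

theory Submission
  imports Defs "HOL-Probability.Distributions"
begin


definition dn :: "nat \<Rightarrow> (nat \<Rightarrow> real) \<Rightarrow> (nat \<Rightarrow> real) \<Rightarrow> real" where
  "dn n x y = sqrt (\<Sum>i<n. (x i - y i)^2)"

lemma dn_sym: "dn n x y = dn n y x"
  unfolding dn_def by (simp add: power2_commute)

lemma dn_self: "dn n x x = 0"
  unfolding dn_def by simp

lemma dn_nonneg: "dn n x y \<ge> 0"
  unfolding dn_def by (simp add: sum_nonneg)

lemma dn_L2: "dn n x y = L2_set (\<lambda>i. x i - y i) {..<n}"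
  unfolding dn_def L2_set_def by simp

lemma dn_triangle: "dn n x z \<le> dn n x y + dn n y z"
proof -
  have "dn n x z = L2_set (\<lambda>i. (x i - y i) + (y i - z i)) {..<n}"
    unfolding dn_L2 by simp
  also have "\<dots> \<le> dn n x y + dn n y z"
    unfolding dn_L2 by (rule L2_set_triangle_ineq)
  finally show ?thesis .
qed

lemma dn_sq: "(dn n x y)\<^sup>2 = (\<Sum>i<n. (x i - y i)^2)"
  unfolding dn_def by (simp add: sum_nonneg)

lemma cballn_dn: "cballn n y r = {x \<in> Rn n. dn n x y \<le> r}"
  unfolding cballn_def dn_def by simp

definition sep :: "nat \<Rightarrow> real \<Rightarrow> (nat \<Rightarrow> real) set \<Rightarrow> bool" where
  "sep n d C \<longleftrightarrow> (\<forall>x\<in>C. \<forall>y\<in>C. x \<noteq> y \<longrightarrow> d < dn n x y)"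

lemma exists_maximal_sep:
  assumes d: "d \<ge> 0"
  shows "\<exists>C. C \<subseteq> Rn n \<and> sep n d C \<and> (\<forall>x\<in>Rn n. \<exists>c\<in>C. dn n x c \<le> d)"
proof -
  define A where "A = {C. C \<subseteq> Rn n \<and> sep n d C}"
  have "\<forall>Ch\<in>chains A. \<Union>Ch \<in> A"
  proof
    fix Ch assume Ch: "Ch \<in> chains A"
    then have sub: "Ch \<subseteq> A" and ch: "\<forall>X\<in>Ch. \<forall>Y\<in>Ch. X \<subseteq> Y \<or> Y \<subseteq> X"
      by (auto simp: chains_def chain_subset_def)
    have "\<Union>Ch \<subseteq> Rn n" using sub by (auto simp: A_def)
    moreover have "sep n d (\<Union>Ch)"
      unfolding sep_def
    proof (intro ballI impI)
      fix x y assume "x \<in> \<Union>Ch" "y \<in> \<Union>Ch" "x \<noteq> y"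
      then obtain X Y where XY: "X \<in> Ch" "Y \<in> Ch" "x \<in> X" "y \<in> Y" by auto
      from ch XY have "X \<subseteq> Y \<or> Y \<subseteq> X" by blast
      then show "d < dn n x y"
      proof
        assume "X \<subseteq> Y"
        then have "sep n d Y" "x \<in> Y" using sub XY by (auto simp: A_def)
        then show ?thesis using XY \<open>x \<noteq> y\<close> by (auto simp: sep_def)
      next
        assume "Y \<subseteq> X"
        then have "sep n d X" "y \<in> X" using sub XY by (auto simp: A_def)
        then show ?thesis using XY \<open>x \<noteq> y\<close> by (auto simp: sep_def)
      qed
    qed
    ultimately show "\<Union>Ch \<in> A" by (simp add: A_def)
  qed
  then obtain M where M: "M \<in> A" and max: "\<forall>X\<in>A. M \<subseteq> X \<longrightarrow> X = M"
    using Zorn_Lemma by blast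
  have "\<forall>x\<in>Rn n. \<exists>c\<in>M. dn n x c \<le> d"
  proof (rule ccontr)
    assume "\<not> ?thesis"
    then obtain x where x: "x \<in> Rn n" "\<forall>c\<in>M. d < dn n x c" by (auto simp: not_le)
    have "insert x M \<in> A"
      using M x by (auto simp: A_def sep_def dn_sym)
    then have "insert x M = M" using max by blast
    then have "x \<in> M" by blast
    then show False using x d by (auto simp: dn_self)
  qed
  then show ?thesis using M by (auto simp: A_def)
qed

lemma sum_sq_diff_identity:
  fixes a :: "'a \<Rightarrow> real"
  assumes "finite F"
  shows "(\<Sum>x\<in>F. \<Sum>z\<in>F. (a x - a z)\<^sup>2) = 2 * card F * (\<Sum>x\<in>F. (a x)\<^sup>2) - 2 * (\<Sum>x\<in>F. a x)\<^sup>2"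
proof -
  define S1 where "S1 = (\<Sum>x\<in>F. a x)"
  define S2 where "S2 = (\<Sum>x\<in>F. (a x)\<^sup>2)"
  have m: "(\<Sum>z\<in>F. 2 * (a x * a z)) = 2 * a x * S1" for x
    unfolding S1_def by (simp add: sum_distrib_left mult.assoc)
  have inner: "(\<Sum>z\<in>F. (a x - a z)\<^sup>2) = card F * (a x)\<^sup>2 + S2 - 2 * a x * S1" for x
  proof -
    have "(\<Sum>z\<in>F. (a x - a z)\<^sup>2) = (\<Sum>z\<in>F. ((a x)\<^sup>2 + (a z)\<^sup>2) - 2 * (a x * a z))"
      by (simp add: power2_diff mult.assoc)
    also have "\<dots> = (\<Sum>z\<in>F. (a x)\<^sup>2 + (a z)\<^sup>2) - (\<Sum>z\<in>F. 2 * (a x * a z))"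
      by (rule sum_subtractf)
    also have "(\<Sum>z\<in>F. (a x)\<^sup>2 + (a z)\<^sup>2) = card F * (a x)\<^sup>2 + S2"
      unfolding S2_def by (simp add: sum.distrib)
    finally show ?thesis by (simp add: m)
  qed
  have "(\<Sum>x\<in>F. \<Sum>z\<in>F. (a x - a z)\<^sup>2) = (\<Sum>x\<in>F. (card F * (a x)\<^sup>2 + S2) - 2 * S1 * a x)"
    by (simp add: inner mult.commute mult.left_commute)
  also have "\<dots> = (\<Sum>x\<in>F. card F * (a x)\<^sup>2 + S2) - (\<Sum>x\<in>F. 2 * S1 * a x)"
    by (rule sum_subtractf)
  also have "(\<Sum>x\<in>F. card F * (a x)\<^sup>2 + S2) = card F * S2 + card F * S2"
    unfolding S2_def by (simp add: sum.distrib sum_distrib_left)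
  also have "(\<Sum>x\<in>F. 2 * S1 * a x) = 2 * S1 * S1"
    unfolding S1_def by (simp add: sum_distrib_left)
  finally show ?thesis unfolding S1_def[symmetric] S2_def[symmetric] by (simp add: power2_eq_square)
qed

lemma no_L_points:
  fixes y :: "nat \<Rightarrow> real" and r d :: real
  assumes L: "L \<ge> 2" and sepC: "sep n d C" and d: "d \<ge> 0"
    and dr: "d\<^sup>2 = 2 * real L * r\<^sup>2 / (real L - 1)"
    and F: "F \<subseteq> C \<inter> cballn n y r" "finite F" "card F = L"
  shows False
proof -
  define D where "D = (\<lambda>x z :: nat \<Rightarrow> real. \<Sum>i<n. (x i - z i)^2)"
  have Dnn: "D x z \<ge> 0" for x z unfolding D_def by (simp add: sum_nonneg)
  have Ddn: "D x z = (dn n x z)\<^sup>2" for x z unfolding D_def dn_sq ..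
  have Fr: "D x y \<le> r\<^sup>2" if "x \<in> F" for x
  proof -
    have "dn n x y \<le> r" using F that by (auto simp: cballn_dn)
    then have "(dn n x y)\<^sup>2 \<le> r\<^sup>2" by (intro power_mono) (auto simp: dn_nonneg)
    then show ?thesis by (simp add: Ddn)
  qed
  have "(\<Sum>x\<in>F. \<Sum>z\<in>F. D x z) = (\<Sum>x\<in>F. \<Sum>i<n. \<Sum>z\<in>F. (x i - z i)\<^sup>2)"
    unfolding D_def by (rule sum.cong[OF refl], rule sum.swap)
  also have "\<dots> = (\<Sum>i<n. \<Sum>x\<in>F. \<Sum>z\<in>F. (x i - z i)\<^sup>2)"
    by (rule sum.swap)
  also have "\<dots> = (\<Sum>i<n. \<Sum>x\<in>F. \<Sum>z\<in>F. ((x i - y i) - (z i - y i))\<^sup>2)"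
    by simp
  also have "\<dots> = (\<Sum>i<n. 2 * card F * (\<Sum>x\<in>F. (x i - y i)\<^sup>2) - 2 * (\<Sum>x\<in>F. x i - y i)\<^sup>2)"
    by (intro sum.cong refl sum_sq_diff_identity[where a = "\<lambda>x. x _ - y _"] F)
  also have "\<dots> \<le> (\<Sum>i<n. 2 * card F * (\<Sum>x\<in>F. (x i - y i)\<^sup>2))"
    by (intro sum_mono) auto
  also have "\<dots> = 2 * card F * (\<Sum>x\<in>F. D x y)"
    unfolding D_def sum_distrib_left by (subst sum.swap) (rule refl)
  also have "\<dots> \<le> 2 * card F * (\<Sum>x\<in>F. r\<^sup>2)"
    by (intro mult_left_mono sum_mono Fr) auto
  also have "\<dots> = 2 * real L * real L * r\<^sup>2" using F by simp
  finally have up: "(\<Sum>x\<in>F. \<Sum>z\<in>F. D x z) \<le> 2 * real L * real L * r\<^sup>2" .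
  have "2 * real L * real L * r\<^sup>2 = real L * (real L - 1) * d\<^sup>2"
    using L dr by (simp add: field_simps)
  also have "\<dots> = (\<Sum>x\<in>F. \<Sum>z\<in>F - {x}. d\<^sup>2)"
    using F L by (simp add: card_Diff_singleton of_nat_diff)
  also have "\<dots> < (\<Sum>x\<in>F. \<Sum>z\<in>F - {x}. D x z)"
  proof (rule sum_strict_mono)
    show "finite F" by fact
    show "F \<noteq> {}" using F L by auto
    fix x assume x: "x \<in> F"
    show "(\<Sum>z\<in>F - {x}. d\<^sup>2) < (\<Sum>z\<in>F - {x}. D x z)"
    proof (rule sum_strict_mono)
      show "finite (F - {x})" using F by simp
      have "card (F - {x}) \<noteq> 0" using F L x by (simp add: card_Diff_singleton)
      then show "F - {x} \<noteq> {}" by (metis card.empty)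
      fix z assume z: "z \<in> F - {x}"
      then have zF: "z \<in> F" "z \<noteq> x" by auto
      have "x \<in> C" "z \<in> C" using F(1) x zF by auto
      then have "d < dn n x z" using sepC zF unfolding sep_def by auto
      then have "d\<^sup>2 < (dn n x z)\<^sup>2" using d by (intro power_strict_mono) auto
      then show "d\<^sup>2 < D x z" by (simp add: Ddn)
    qed
  qed
  also have "\<dots> \<le> (\<Sum>x\<in>F. \<Sum>z\<in>F. D x z)"
  proof (rule sum_mono)
    fix x assume "x \<in> F"
    show "(\<Sum>z\<in>F - {x}. D x z) \<le> (\<Sum>z\<in>F. D x z)"
      by (rule sum_mono2) (use F in \<open>auto simp: Dnn\<close>)
  qed
  finally show False using up by simp
qed

lemma sep_packing:
  fixes y :: "nat \<Rightarrow> real" and r d :: real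
  assumes L: "L \<ge> 2" and sepC: "sep n d C" and d: "d \<ge> 0"
    and dr: "d\<^sup>2 = 2 * real L * r\<^sup>2 / (real L - 1)"
  shows "finite (C \<inter> cballn n y r) \<and> card (C \<inter> cballn n y r) \<le> L - 1"
proof -
  have fin: "finite (C \<inter> cballn n y r)"
  proof (rule ccontr)
    assume "infinite (C \<inter> cballn n y r)"
    then obtain F where "finite F" "card F = L" "F \<subseteq> C \<inter> cballn n y r"
      using infinite_arbitrarily_large by blast
    then show False using no_L_points[OF L sepC d dr] by blast
  qed
  moreover have "card (C \<inter> cballn n y r) \<le> L - 1"
  proof (rule ccontr)
    assume "\<not> ?thesis"
    then have "L \<le> card (C \<inter> cballn n y r)" by simp
    then obtain F where "F \<subseteq> C \<inter> cballn n y r" "card F = L"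
      using obtain_subset_with_card_n by metis
    moreover have "finite F" using fin calculation(1) finite_subset by blast
    ultimately show False using no_L_points[OF L sepC d dr] by blast
  qed
  ultimately show ?thesis by blast
qed



lemma nd_int: "\<sigma> > 0 \<Longrightarrow> (\<integral>\<^sup>+x. ennreal (normal_density m \<sigma> x) \<partial>lborel) = 1"
  by (subst nn_integral_eq_integral) (auto simp: normal_density_nonneg)

lemma gauss_factor:
  assumes "\<sigma> > 0"
  shows "(\<integral>\<^sup>+x. ennreal (exp (1/2 - (x - m)\<^sup>2 / (2*\<sigma>\<^sup>2))) \<partial>lborel)
     = ennreal (exp (1/2) * sqrt (2*pi*\<sigma>\<^sup>2))"
proof -
  have eq: "exp (1/2 - (x - m)\<^sup>2 / (2*\<sigma>\<^sup>2)) = (exp (1/2) * sqrt (2*pi*\<sigma>\<^sup>2)) * normal_density m \<sigma> x" for x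
  proof -
    have sq: "sqrt (2*pi*\<sigma>\<^sup>2) > 0" using assms by simp
    have "(exp (1/2) * sqrt (2*pi*\<sigma>\<^sup>2)) * normal_density m \<sigma> x
        = exp (1/2) * exp (-(x - m)\<^sup>2 / (2*\<sigma>\<^sup>2))"
      unfolding normal_density_def using sq assms by simp
    also have "\<dots> = exp (1/2 + (-(x - m)\<^sup>2 / (2*\<sigma>\<^sup>2)))" by (simp only: exp_add)
    also have "1/2 + (-(x - m)\<^sup>2 / (2*\<sigma>\<^sup>2)) = 1/2 - (x - m)\<^sup>2 / (2*\<sigma>\<^sup>2)" by simp
    finally show ?thesis by simp
  qed
  have "(\<integral>\<^sup>+x. ennreal (exp (1/2 - (x - m)\<^sup>2 / (2*\<sigma>\<^sup>2))) \<partial>lborel)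
     = (\<integral>\<^sup>+x. ennreal (exp (1/2) * sqrt (2*pi*\<sigma>\<^sup>2)) * ennreal (normal_density m \<sigma> x) \<partial>lborel)"
    by (simp only: eq, intro nn_integral_cong, rule ennreal_mult) (use assms in \<open>auto simp: normal_density_nonneg\<close>)
  also have "\<dots> = ennreal (exp (1/2) * sqrt (2*pi*\<sigma>\<^sup>2))"
    by (subst nn_integral_cmult) (auto simp: nd_int assms)
  finally show ?thesis .
qed

lemma space_lebn: "space (lebn n) = Rn n"
  by (simp add: lebn_def Rn_def space_PiM)

lemma cballn_sets: "cballn n y r \<in> sets (lebn n)"
proof -
  have "cballn n y r = {x \<in> space (lebn n). sqrt (\<Sum>i<n. (x i - y i)^2) \<le> r}"
    by (simp add: cballn_def space_lebn)
  also have "\<dots> \<in> sets (lebn n)" unfolding lebn_def by measurable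
  finally show ?thesis .
qed

lemma ball_vol_le:
  assumes n: "n \<ge> 1" and R: "R > 0"
  shows "emeasure (lebn n) (cballn n c R) \<le> ennreal ((exp (1/2) * sqrt (2*pi*R\<^sup>2/n))^n)"
proof -
  interpret product_sigma_finite "\<lambda>_::nat. lborel::real measure" by standard
  define \<sigma> where "\<sigma> = R / sqrt n"
  have sp: "\<sigma> > 0" using n R by (simp add: \<sigma>_def)
  have s2: "\<sigma>\<^sup>2 = R\<^sup>2 / n" using n by (simp add: \<sigma>_def power_divide)
  define f where "f = (\<lambda>i x. ennreal (exp (1/2 - (x - c i)\<^sup>2 / (2*\<sigma>\<^sup>2))))"
  have le: "indicator (cballn n c R) x \<le> (\<Prod>i<n. f i (x i))" if "x \<in> space (lebn n)" for x
  proof (cases "x \<in> cballn n c R")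
    case True
    then have "sqrt (\<Sum>i<n. (x i - c i)^2) \<le> R" by (simp add: cballn_def)
    then have "(sqrt (\<Sum>i<n. (x i - c i)^2))\<^sup>2 \<le> R\<^sup>2" by (intro power_mono) (auto simp: sum_nonneg)
    then have S: "(\<Sum>i<n. (x i - c i)^2) \<le> R\<^sup>2" by (simp add: sum_nonneg)
    have e1: "(\<Prod>i<n. f i (x i)) = ennreal (exp (\<Sum>i<n. 1/2 - (x i - c i)\<^sup>2 / (2*\<sigma>\<^sup>2)))"
      unfolding f_def by (simp add: prod_ennreal exp_sum)
    have e2: "(\<Sum>i<n. 1/2 - (x i - c i)\<^sup>2 / (2*\<sigma>\<^sup>2)) = n/2 - (\<Sum>i<n. (x i - c i)\<^sup>2) / (2*\<sigma>\<^sup>2)"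
      by (simp add: sum_subtractf sum_divide_distrib[symmetric])
    have "(\<Sum>i<n. (x i - c i)\<^sup>2) / (2*\<sigma>\<^sup>2) \<le> R\<^sup>2 / (2*\<sigma>\<^sup>2)"
      using S sp by (intro divide_right_mono) auto
    also have "R\<^sup>2 / (2*\<sigma>\<^sup>2) = n/2" using R n by (simp add: s2)
    finally have "1 \<le> exp (\<Sum>i<n. 1/2 - (x i - c i)\<^sup>2 / (2*\<sigma>\<^sup>2))" unfolding e2 by simp
    then have "ennreal 1 \<le> (\<Prod>i<n. f i (x i))" unfolding e1 by (rule ennreal_leI)
    then show ?thesis using True by simp
  next
    case False then show ?thesis by (simp add: indicator_def)
  qed
  have "emeasure (lebn n) (cballn n c R) = (\<integral>\<^sup>+x. indicator (cballn n c R) x \<partial>lebn n)"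
    using cballn_sets by simp
  also have "\<dots> \<le> (\<integral>\<^sup>+x. (\<Prod>i<n. f i (x i)) \<partial>lebn n)"
    by (intro nn_integral_mono le)
  also have "\<dots> = (\<Prod>i<n. integral\<^sup>N lborel (f i))"
    unfolding lebn_def by (intro product_nn_integral_prod) (auto simp: f_def)
  also have "\<dots> = (\<Prod>i<n. ennreal (exp (1/2) * sqrt (2*pi*\<sigma>\<^sup>2)))"
    unfolding f_def using sp by (simp add: gauss_factor)
  also have "\<dots> = ennreal ((exp (1/2) * sqrt (2*pi*R\<^sup>2/n))^n)"
    by (simp add: s2 ennreal_power)
  finally show ?thesis .
qed



lemma cover_count:
  fixes C :: "(nat \<Rightarrow> real) set" and K d V :: real
  assumes CR: "C \<subseteq> Rn n" and cover: "\<forall>x\<in>Rn n. \<exists>c\<in>C. dn n x c \<le> d"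
    and fin: "finite (C \<inter> cballn n (\<lambda>_. 0) (K + d))"
    and V: "V \<ge> 0" and Vb: "\<And>c. emeasure (lebn n) (cballn n c d) \<le> ennreal V"
  shows "emeasure (lebn n) (cballn n (\<lambda>_. 0) K) \<le> ennreal (real (card (C \<inter> cballn n (\<lambda>_. 0) (K + d))) * V)"
proof -
  define G where "G = C \<inter> cballn n (\<lambda>_. 0) (K + d)"
  have sub: "cballn n (\<lambda>_. 0) K \<subseteq> (\<Union>c\<in>G. cballn n c d)"
  proof
    fix x assume x: "x \<in> cballn n (\<lambda>_. 0) K"
    then have xR: "x \<in> Rn n" and xK: "dn n x (\<lambda>_. 0) \<le> K" by (auto simp: cballn_dn)
    obtain c where c: "c \<in> C" "dn n x c \<le> d" using cover xR by blast
    have "dn n c (\<lambda>_. 0) \<le> dn n c x + dn n x (\<lambda>_. 0)" by (rule dn_triangle)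
    also have "\<dots> \<le> K + d" using c xK by (simp add: dn_sym)
    finally have "c \<in> G" using c CR by (auto simp: G_def cballn_dn)
    moreover have "x \<in> cballn n c d" using xR c by (simp add: cballn_dn)
    ultimately show "x \<in> (\<Union>c\<in>G. cballn n c d)" by blast
  qed
  have "emeasure (lebn n) (cballn n (\<lambda>_. 0) K) \<le> emeasure (lebn n) (\<Union>c\<in>G. cballn n c d)"
    by (rule emeasure_mono[OF sub]) (use fin in \<open>auto simp: G_def cballn_sets\<close>)
  also have "\<dots> \<le> (\<Sum>c\<in>G. emeasure (lebn n) (cballn n c d))"
    by (rule emeasure_subadditive_finite) (use fin in \<open>auto simp: G_def cballn_sets\<close>)
  also have "\<dots> \<le> (\<Sum>c\<in>G. ennreal V)"
    by (intro sum_mono Vb)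
  also have "\<dots> = ennreal (real (card G) * V)"
    using V by (simp add: ennreal_mult ennreal_of_nat_eq_real_of_nat)
  finally show ?thesis by (simp add: G_def)
qed

lemma ball_pos:
  assumes n: "n \<ge> 1" and K: "K > 0"
  shows "emeasure (lebn n) (cballn n (\<lambda>_. 0) K) \<ge> ennreal ((2 * K / n)^n)"
proof -
  interpret product_sigma_finite "\<lambda>_::nat. lborel::real measure" by standard
  define B where "B = PiE {..<n} (\<lambda>_. {-K/n..K/n})"
  have "B \<subseteq> cballn n (\<lambda>_. 0) K"
  proof
    fix x assume x: "x \<in> B"
    have xi: "(x i)\<^sup>2 \<le> (K/n)\<^sup>2" if "i < n" for i
    proof -
      have "-(K/n) \<le> x i \<and> x i \<le> K/n" using x that by (auto simp: B_def PiE_iff)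
      then have "\<bar>x i\<bar> \<le> K/n" by linarith
      then show ?thesis by (metis abs_le_square_iff abs_of_nonneg K n divide_nonneg_nonneg less_imp_le of_nat_0_le_iff)
    qed
    have "(\<Sum>i<n. (x i - 0)^2) \<le> (\<Sum>i<n. (K/n)\<^sup>2)" using xi by (intro sum_mono) auto
    also have "\<dots> = K\<^sup>2 / n" using n by (simp add: power2_eq_square)
    also have "\<dots> \<le> K\<^sup>2" using n K by (simp add: divide_le_eq)  
    finally have "sqrt (\<Sum>i<n. (x i - 0)^2) \<le> K" using K by (simp add: real_sqrt_le_iff real_le_lsqrt sum_nonneg)
    moreover have "x \<in> Rn n" using x by (auto simp: B_def Rn_def PiE_iff)
    ultimately show "x \<in> cballn n (\<lambda>_. 0) K" by (simp add: cballn_def)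
  qed
  then have "emeasure (lebn n) B \<le> emeasure (lebn n) (cballn n (\<lambda>_. 0) K)"
    by (intro emeasure_mono cballn_sets)
  moreover have "emeasure (lebn n) B = (\<Prod>i<n. emeasure lborel {-K/n..K/n})"
    unfolding lebn_def B_def by (rule emeasure_PiM) auto
  moreover have "(\<Prod>i<n. emeasure lborel {-K/n..K/n}) = ennreal ((2 * K / n)^n)"
    using K n by (simp add: prod_ennreal ennreal_power)
  ultimately show ?thesis by simp
qed

lemma g_facts:
  assumes n: "n \<ge> 1" and K: "K > 0"
  shows "0 < measure (lebn n) (cballn n (\<lambda>_. 0) K)"
    and "emeasure (lebn n) (cballn n (\<lambda>_. 0) K) = ennreal (measure (lebn n) (cballn n (\<lambda>_. 0) K))"
    and "measure (lebn n) (cballn n (\<lambda>_. 0) K) \<le> (exp (1/2) * sqrt (2*pi/n))^n * K^n"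
proof -
  have up: "emeasure (lebn n) (cballn n (\<lambda>_. 0) K) \<le> ennreal ((exp (1/2) * sqrt (2*pi*K\<^sup>2/n))^n)"
    by (rule ball_vol_le[OF n K])
  have eqA: "(exp (1/2) * sqrt (2*pi*K\<^sup>2/n))^n = (exp (1/2) * sqrt (2*pi/n))^n * K^n"
  proof -
    have "sqrt (2*pi*K\<^sup>2/n) = sqrt (2*pi/n) * K" using K by (simp add: real_sqrt_mult real_sqrt_divide)
    then show ?thesis by (simp add: power_mult_distrib mult.assoc)
  qed
  have fin: "emeasure (lebn n) (cballn n (\<lambda>_. 0) K) \<noteq> \<infinity>"
  proof -
    have "emeasure (lebn n) (cballn n (\<lambda>_. 0) K) < \<infinity>" using up by (rule le_less_trans) simp
    then show ?thesis by simp
  qed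
  show e: "emeasure (lebn n) (cballn n (\<lambda>_. 0) K) = ennreal (measure (lebn n) (cballn n (\<lambda>_. 0) K))"
    using fin by (simp add: emeasure_eq_ennreal_measure)
  have lo: "ennreal ((2 * K / n)^n) \<le> ennreal (measure (lebn n) (cballn n (\<lambda>_. 0) K))"
    using ball_pos[OF n K] e by simp
  have "0 < (2 * K / n)^n" using K n by simp
  then show "0 < measure (lebn n) (cballn n (\<lambda>_. 0) K)"
    using lo by (metis ennreal_le_iff less_le_trans measure_nonneg)
  have "ennreal (measure (lebn n) (cballn n (\<lambda>_. 0) K)) \<le> ennreal ((exp (1/2) * sqrt (2*pi/n))^n * K^n)"
    using up e eqA by simp
  then show "measure (lebn n) (cballn n (\<lambda>_. 0) K) \<le> (exp (1/2) * sqrt (2*pi/n))^n * K^n"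
    using K by (subst (asm) ennreal_le_iff) auto
qed

lemma step_bound:
  fixes C :: "(nat \<Rightarrow> real) set"
  assumes n: "n \<ge> 1" and K: "K > 0" and d: "d > 0" and CR: "C \<subseteq> Rn n"
    and cover: "\<forall>x\<in>Rn n. \<exists>c\<in>C. dn n x c \<le> d"
    and V: "V > 0" and Vb: "\<And>c. emeasure (lebn n) (cballn n c d) \<le> ennreal V"
    and lt: "rate_term n C (K + d) < ereal e"
  shows "ln (measure (lebn n) (cballn n (\<lambda>_. 0) K)) - ln V - ln (measure (lebn n) (cballn n (\<lambda>_. 0) (K + d))) < n * e"
proof -
  define G where "G = C \<inter> cballn n (\<lambda>_. 0) (K + d)"
  define g1 where "g1 = measure (lebn n) (cballn n (\<lambda>_. 0) K)"
  define g2 where "g2 = measure (lebn n) (cballn n (\<lambda>_. 0) (K + d))"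
  have Kd: "K + d > 0" using K d by simp
  note f1 = g_facts[OF n K, folded g1_def] and f2 = g_facts[OF n Kd, folded g2_def]
  have fin: "finite G"
  proof (rule ccontr)
    assume "infinite G"
    then have "rate_term n C (K + d) = \<infinity>" by (simp add: rate_term_def G_def Let_def)
    then show False using lt by simp
  qed
  have cc: "ennreal g1 \<le> ennreal (real (card G) * V)"
    using cover_count[OF CR cover _ _ Vb, of K] fin V f1(2) by (simp add: G_def)
  then have cc': "g1 \<le> real (card G) * V" using V by (subst (asm) ennreal_le_iff) auto
  have cpos: "card G \<noteq> 0"
  proof
    assume "card G = 0"
    then show False using cc' f1(1) by simp
  qed
  then have ne: "G \<noteq> {}" by auto
  then have "rate_term n C (K + d) = ereal (ln (real (card G) / g2) / real n)"
    using fin cpos by (simp add: rate_term_def G_def g2_def Let_def)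
  then have "ln (real (card G) / g2) / real n < e" using lt by simp
  then have a: "ln (real (card G) / g2) < n * e" using n by (simp add: divide_less_eq mult.commute)
  have "g1 / V \<le> real (card G)" using cc' V by (simp add: divide_le_eq)
  then have "g1 / V / g2 \<le> real (card G) / g2" using f2(1) by (intro divide_right_mono) auto
  then have "ln (g1 / V / g2) \<le> ln (real (card G) / g2)"
    using f1(1) f2(1) V cpos by (subst ln_le_cancel_iff) auto
  moreover have "ln (g1 / V / g2) = ln g1 - ln V - ln g2"
    using f1(1) f2(1) V by (simp add: ln_div ln_mult)
  ultimately show ?thesis using a by (simp add: g1_def g2_def)
qed

lemma rate_lower:
  fixes C :: "(nat \<Rightarrow> real) set"
  assumes n: "n \<ge> 1" and d: "d > 0" and CR: "C \<subseteq> Rn n"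
    and cover: "\<forall>x\<in>Rn n. \<exists>c\<in>C. dn n x c \<le> d"
    and V: "V > 0" and Vb: "\<And>c. emeasure (lebn n) (cballn n c d) \<le> ennreal V"
  shows "ereal (- ln V / n) \<le> rate n C"
proof (rule ccontr)
  define g where "g = (\<lambda>K. measure (lebn n) (cballn n (\<lambda>_. 0) K))"
  define c0 where "c0 = - ln V / n"
  assume "\<not> ereal (- ln V / n) \<le> rate n C"
  then have "rate n C < ereal c0" by (simp add: c0_def not_le)
  then obtain z where z: "rate n C < z" "z < ereal c0" using dense by blast
  then obtain e where ze: "z = ereal e" by (cases z) auto
  have ec: "e < c0" using z ze by simp
  have "eventually (\<lambda>K. rate_term n C K < ereal e) at_top"
    using z ze unfolding rate_def by (intro Limsup_lessD) simp
  then obtain K1 where K1: "\<And>K. K \<ge> K1 \<Longrightarrow> rate_term n C K < ereal e"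
    by (auto simp: eventually_at_top_linorder)
  define K0 where "K0 = max K1 1"
  have K0: "K0 > 0" "K0 \<ge> K1" by (auto simp: K0_def)
  define \<delta> where "\<delta> = - ln V - n * e"
  have np: "real n > 0" using n by simp
  have "n * e < n * c0" using ec np by simp
  also have "n * c0 = - ln V" using np by (simp add: c0_def)
  finally have \<delta>: "\<delta> > 0" by (simp add: \<delta>_def)
  have step: "ln (g (K + d)) > ln (g K) + \<delta>" if "K \<ge> K0" for K
  proof -
    have "K > 0" using that K0 by simp
    moreover have "rate_term n C (K + d) < ereal e" using that K0 d by (intro K1) simp
    ultimately have "ln (g K) - ln V - ln (g (K + d)) < n * e"
      unfolding g_def by (intro step_bound[OF n _ d CR cover V Vb])
    then show ?thesis by (simp add: \<delta>_def)
  qed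
  have ind: "ln (g (K0 + j * d)) \<ge> ln (g K0) + j * \<delta>" for j :: nat
  proof (induction j)
    case 0 then show ?case by simp
  next
    case (Suc j)
    have "K0 + j * d \<ge> K0" using d by simp
    then have "ln (g (K0 + j * d + d)) > ln (g (K0 + j * d)) + \<delta>" by (rule step)
    moreover have "K0 + real (Suc j) * d = K0 + j * d + d" by (simp add: algebra_simps)
    ultimately show ?case using Suc.IH by (simp add: algebra_simps)
  qed
  define A where "A = (exp (1/2) * sqrt (2*pi/n))^n"
  have A: "A > 0" using np by (simp add: A_def)
  have upper: "ln (g K) \<le> ln A + n * ln K" if "K > 0" for K
  proof -
    have "0 < g K" "g K \<le> A * K^n" using g_facts[OF n that] by (simp_all add: g_def A_def)
    then have "ln (g K) \<le> ln (A * K^n)" using A that by (subst ln_le_cancel_iff) auto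
    also have "\<dots> = ln A + n * ln K" using A that by (simp add: ln_mult ln_realpow)
    finally show ?thesis .
  qed
  define M where "M = 2 * n * d / \<delta>"
  have M: "M > 0" using np d \<delta> by (simp add: M_def)
  have lnb: "ln y \<le> y / M + ln M" if "y > 0" for y
  proof -
    have "ln (y / M) \<le> y / M - 1" using that M by (intro ln_le_minus_one) simp
    then show ?thesis using that M by (simp add: ln_div)
  qed
  define Cst where "Cst = ln A + n * K0 / M + n * ln M - ln (g K0)"
  obtain j :: nat where j: "2 * Cst / \<delta> < j" using reals_Archimedean2 by blast
  have pos: "K0 + j * d > 0" using K0 d by (simp add: add_pos_nonneg)
  have "ln (g K0) + j * \<delta> \<le> ln A + n * ln (K0 + j * d)"
    using ind[of j] upper[OF pos] by simp
  also have "\<dots> \<le> ln A + n * ((K0 + j * d) / M + ln M)"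
    using lnb[OF pos] np by (intro add_left_mono mult_left_mono) auto
  also have "n * ((K0 + j * d) / M + ln M) = n * K0 / M + n * ln M + j * \<delta> / 2"
    using np d \<delta> M by (simp add: M_def field_simps)
  finally have "j * \<delta> / 2 \<le> Cst" unfolding Cst_def by linarith
  moreover have "Cst < j * \<delta> / 2" using j \<delta> by (simp add: divide_less_eq mult.commute)
  ultimately show False by simp
qed



lemma target_eq:
  fixes N :: real and L n :: nat
  assumes N: "N > 0" and L: "L \<ge> 2" and n: "n \<ge> 1"
  shows "- ln ((exp (1/2) * sqrt (2*pi*(sqrt (2 * real L * (real n * N) / (real L - 1)))\<^sup>2/n))^n) / n
         = (1/2) * ln ((real L - 1) / (4 * pi * exp 1 * real L * N))"
proof -
  define Q where "Q = 4 * pi * real L * N / (real L - 1)"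
  have L1: "real L - 1 > 0" using L by simp
  have Q: "Q > 0" using N L1 L by (simp add: Q_def)
  have np: "real n > 0" using n by simp
  have dq: "2*pi*(sqrt (2 * real L * (real n * N) / (real L - 1)))\<^sup>2/n = Q"
    using N L1 np by (simp add: Q_def field_simps)
  have "ln ((exp (1/2) * sqrt Q)^n) = n * (1/2 + ln Q / 2)"
    using Q by (simp add: ln_realpow ln_mult ln_sqrt)
  then have lhs: "- ln ((exp (1/2) * sqrt Q)^n) / n = - (1/2) - ln Q / 2" using np by simp
  have "(real L - 1) / (4 * pi * exp 1 * real L * N) = 1 / (exp 1 * Q)"
    using N L1 L by (simp add: Q_def field_simps)
  then have "ln ((real L - 1) / (4 * pi * exp 1 * real L * N)) = - (1 + ln Q)"
    using Q by (simp add: ln_div ln_mult)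
  then show ?thesis unfolding dq lhs by simp
qed

theorem mainTheorem12:
  fixes N :: real and L :: nat
  assumes "N > 0" and "L \<ge> 2"
  shows "capacity N L \<ge> ereal ((1/2) * ln ((real L - 1) / (4 * pi * exp 1 * real L * N)))"
proof -
  define T where "T = (1/2) * ln ((real L - 1) / (4 * pi * exp 1 * real L * N))"
  have ev: "ereal T \<le> (SUP C \<in> {C. multiple_packing n N L C}. rate n C)" if n: "n \<ge> 1" for n
  proof -
    define r where "r = sqrt (real n * N)"
    define d where "d = sqrt (2 * real L * (real n * N) / (real L - 1))"
    have L1: "real L - 1 > 0" using assms by simp
    have np: "real n > 0" using n by simp
    have d: "d > 0" using assms L1 np by (simp add: d_def)
    have dr: "d\<^sup>2 = 2 * real L * r\<^sup>2 / (real L - 1)"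
      using assms L1 np by (simp add: d_def r_def)
    obtain C where C: "C \<subseteq> Rn n" "sep n d C" "\<forall>x\<in>Rn n. \<exists>c\<in>C. dn n x c \<le> d"
      using exists_maximal_sep[of d n] d by auto
    have mp: "multiple_packing n N L C"
      unfolding multiple_packing_def r_def[symmetric]
      using C(1) sep_packing[OF assms(2) C(2) _ dr] d by auto
    define V where "V = (exp (1/2) * sqrt (2*pi*d\<^sup>2/n))^n"
    have V: "V > 0" using d np by (simp add: V_def)
    have Vb: "emeasure (lebn n) (cballn n c d) \<le> ennreal V" for c
      unfolding V_def by (rule ball_vol_le[OF n d])
    have "ereal (- ln V / n) \<le> rate n C"
      by (rule rate_lower[OF n d C(1) C(3) V Vb])
    also have "- ln V / n = T"
      unfolding V_def d_def T_def by (rule target_eq[OF assms n])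
    also have "rate n C \<le> (SUP C \<in> {C. multiple_packing n N L C}. rate n C)"
      using mp by (intro SUP_upper) simp
    finally show ?thesis .
  qed
  have "ereal T \<le> capacity N L"
    unfolding capacity_def
    by (rule le_Limsup) (use ev in \<open>auto simp: eventually_sequentially\<close>)
  then show ?thesis by (simp add: T_def)
qed

end
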